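(* Let $W$ be a real $N\times N$ matrix with singular value decomposition $W=U\Sigma V^\top$ and singular values $\sigma_1\ge\cdots\ge\sigma_N\ge0$, let $1\le n<N$, and let $V_n$ be the $N\times n$ matrix of the first $n$ right singular vectors of $W$ (first $n$ columns of $V$). Let $g:\mathbb{R}^N\times\mathbb{R}^N\to\mathbb{R}^N$ be continuously differentiable, with Jacobian matrices $J_x(x,y)=\big(\partial g_i/\partial x_j\big)_{i,j}$ and $J_y(x,y)=\big(\partial g_i/\partial y_j\big)_{i,j}$. Consider the complete dynamics $\dot x=g(x,Wx)$ and the reduced dynamics $\dot X=Mg(M^+X,WM^+X)$ with $M=V_n^\top$, and define the alignment error at $x\in\mathbb{R}^N$ by \[\mathcal{E}(x)=\frac{1}{\sqrt n}\big\|Mg(x,Wx)-Mg(M^+Mx,WM^+Mx)\big\|.\] Then for every $x\in\mathbb{R}^N$ there is a point $x'$ on the segment between $x$ and $V_nV_n^\top x$ such that, with $y'=Wx'$, \[\mathcal{E}(x)\le\frac{1}{\sqrt n}\Big[\big\|V_n^\top J_x(x',y')(I-V_nV_n^\top)x\big\|+\sigma_{n+1}\big\|V_n^\top J_y(x',y')\big\|_2\,\|x\|\Big].\] Moreover, for any $x\neq0$, \[\frac{\mathcal{E}(x)}{\|x\|}\le\frac{1}{\sqrt n}\Big[\alpha(x',y')+\sigma_{n+1}\beta(x',y')\Big],\] where $\alpha(x',y')=\sigma_1(J_x(x',y'))$ and $\beta(x',y')=\sigma_1(J_y(x',y'))$ are the largest singular values of the Jacobians.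
   Context: $\|\cdot\|$ is the Euclidean vector norm, $\|\cdot\|_2$ the spectral matrix norm, $M^+$ the Moore–Penrose pseudoinverse of $M$. *)

theory Defs
  imports "HOL-Analysis.Analysis"
begin

definition pinv :: "real^'m^'n \<Rightarrow> real^'n^'m" where
  "pinv A = (THE B. A ** B ** A = A \<and> B ** A ** B = B \<and>
                    transpose (A ** B) = A ** B \<and> transpose (B ** A) = B ** A)"

definition spec_norm :: "real^'m^'n \<Rightarrow> real" where
  "spec_norm A = onorm (\<lambda>z. A *v z)"

definition largest_singular_value :: "real^'m^'n \<Rightarrow> real" where
  "largest_singular_value A =
     sqrt (Max {l. \<exists>z. z \<noteq> 0 \<and> (transpose A ** A) *v z = l *\<^sub>R z})"

definition outer :: "real^'n \<Rightarrow> real^'m \<Rightarrow> real^'m^'n" where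
  "outer u v = (\<chi> a b. u $ a * v $ b)"

end

theory Submission
  imports Defs
begin


lemma orth_inner_sum:
  fixes w :: "'k \<Rightarrow> 'a::real_inner"
  assumes "finite K" and o: "\<And>i j. i \<in> K \<Longrightarrow> j \<in> K \<Longrightarrow> w i \<bullet> w j = (if i = j then 1 else 0)"
  shows "(\<Sum>k\<in>K. a k *\<^sub>R w k) \<bullet> (\<Sum>k\<in>K. b k *\<^sub>R w k) = (\<Sum>k\<in>K. a k * b k)"
proof -
  have "(\<Sum>k\<in>K. a k *\<^sub>R w k) \<bullet> (\<Sum>k\<in>K. b k *\<^sub>R w k) = (\<Sum>j\<in>K. \<Sum>i\<in>K. a i * b j * (w i \<bullet> w j))"
    by (simp add: inner_sum_left inner_sum_right sum_distrib_left ac_simps)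
  also have "\<dots> = (\<Sum>j\<in>K. \<Sum>i\<in>K. if i = j then a i * b j else 0)"
    by (intro sum.cong refl) (simp add: o)
  also have "\<dots> = (\<Sum>k\<in>K. a k * b k)"
    using assms(1) by (simp add: sum.delta')
  finally show ?thesis .
qed

lemma bessel:
  fixes w :: "'k \<Rightarrow> 'a::real_inner"
  assumes "finite K" and o: "\<And>i j. i \<in> K \<Longrightarrow> j \<in> K \<Longrightarrow> w i \<bullet> w j = (if i = j then 1 else 0)"
  shows "(\<Sum>k\<in>K. (w k \<bullet> z)^2) \<le> (norm z)^2"
proof -
  define p where "p = (\<Sum>k\<in>K. (w k \<bullet> z) *\<^sub>R w k)"
  have pp: "p \<bullet> p = (\<Sum>k\<in>K. (w k \<bullet> z)^2)"
    unfolding p_def by (subst orth_inner_sum[OF assms]) (simp_all add: power2_eq_square)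
  have pz: "p \<bullet> z = (\<Sum>k\<in>K. (w k \<bullet> z)^2)"
    unfolding p_def by (simp add: inner_sum_left power2_eq_square)
  have "0 \<le> (z - p) \<bullet> (z - p)" by simp
  also have "\<dots> = z \<bullet> z - 2 * (p \<bullet> z) + p \<bullet> p" by (simp add: algebra_simps inner_commute)
  finally show ?thesis using pp pz by (simp add: power2_norm_eq_inner)
qed

lemma mv_transpose_inner:
  fixes A :: "real^'m^'k"
  shows "(transpose A *v y) \<bullet> x = y \<bullet> (A *v x)"
  by (simp add: dot_lmul_matrix)

lemma exp2: fixes a b :: "'a::real_inner"
  shows "(a + t *\<^sub>R b) \<bullet> (a + t *\<^sub>R b) = a \<bullet> a + 2*t*(a \<bullet> b) + t^2*(b \<bullet> b)"
  by (simp add: inner_add_left inner_add_right inner_commute[of b a] power2_eq_square algebra_simps)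

lemma quad_nonpos_zero:
  fixes c d :: real
  assumes h: "\<And>t. 2*t*c + t^2*d \<le> 0"
  shows "c = 0"
proof -
  define t where "t = c / (\<bar>d\<bar> + 1)"
  have pos: "\<bar>d\<bar> + 1 > 0" by simp
  have "2*t*c + t^2*d \<le> 0" by (rule h)
  then have "(2*t*c + t^2*d) * (\<bar>d\<bar>+1)^2 \<le> 0"
    by (simp add: mult_nonpos_nonneg)
  also have "(2*t*c + t^2*d) * (\<bar>d\<bar>+1)^2 = 2*c*(t*(\<bar>d\<bar>+1))*(\<bar>d\<bar>+1) + (t*(\<bar>d\<bar>+1))^2*d"
    by (simp add: power2_eq_square algebra_simps)
  also have "t*(\<bar>d\<bar>+1) = c" unfolding t_def using pos by simp
  also have "2*c*c*(\<bar>d\<bar>+1) + c^2*d = c^2 * (2*(\<bar>d\<bar>+1) + d)"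
    by (simp add: power2_eq_square algebra_simps)
  finally have "c^2 * (2*(\<bar>d\<bar>+1) + d) \<le> 0" .
  moreover have "2*(\<bar>d\<bar>+1) + d > 0" by (cases "d \<ge> 0") auto
  ultimately have "c^2 \<le> 0" by (simp add: mult_le_0_iff)
  then show ?thesis by simp
qed

lemma lsv_bound:
  fixes A :: "real^'m^'k"
  shows "norm (A *v z) \<le> largest_singular_value A * norm z"
proof -
  define S where "S = transpose A ** A"
  have Sinner: "(S *v a) \<bullet> b = (A *v a) \<bullet> (A *v b)" for a b
    unfolding S_def by (simp add: matrix_vector_mul_assoc[symmetric] dot_lmul_matrix)
  define L where "L = {l. \<exists>z. z \<noteq> 0 \<and> (transpose A ** A) *v z = l *\<^sub>R z}"
  obtain z1 :: "real^'m" where "norm z1 = 1" using vector_choose_size[of 1] by auto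
  then have ne: "sphere (0::real^'m) 1 \<noteq> {}" by auto
  have "continuous_on (sphere (0::real^'m) 1) (\<lambda>z. (norm (A *v z))^2)"
    by (intro continuous_intros linear_continuous_on bounded_linear_intros)
  from continuous_attains_sup[OF compact_sphere ne this]
  obtain z0 where z0: "norm z0 = 1" and mx: "\<And>y. norm y = 1 \<Longrightarrow> (norm (A *v y))^2 \<le> (norm (A *v z0))^2"
    by auto
  define \<mu> where "\<mu> = (norm (A *v z0))^2"
  have hom: "(norm (A *v y))^2 \<le> \<mu> * (norm y)^2" for y
  proof (cases "y = 0")
    case True then show ?thesis by simp
  next
    case False
    then have ny: "norm y > 0" by simp
    have "(norm (A *v ((1/norm y) *\<^sub>R y)))^2 \<le> \<mu>" unfolding \<mu>_def by (rule mx) (use ny in simp)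
    then have "(norm (A *v y))^2 / (norm y)^2 \<le> \<mu>"
      by (simp add: matrix_vector_mult_scaleR power_divide)
    then show ?thesis using ny by (simp add: divide_le_eq mult.commute)
  qed
  have var: "(A *v z0) \<bullet> (A *v w) = \<mu> * (z0 \<bullet> w)" for w
  proof -
    have "2*t*((A *v z0) \<bullet> (A *v w) - \<mu> * (z0 \<bullet> w)) + t^2*((A *v w) \<bullet> (A *v w) - \<mu> * (w \<bullet> w)) \<le> 0" for t
    proof -
      have "(norm (A *v (z0 + t *\<^sub>R w)))^2 \<le> \<mu> * (norm (z0 + t *\<^sub>R w))^2" by (rule hom)
      then have "(A *v z0 + t *\<^sub>R (A *v w)) \<bullet> (A *v z0 + t *\<^sub>R (A *v w)) \<le> \<mu> * ((z0 + t *\<^sub>R w) \<bullet> (z0 + t *\<^sub>R w))"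
        by (simp add: power2_norm_eq_inner matrix_vector_right_distrib matrix_vector_mult_scaleR)
      moreover have "(A *v z0) \<bullet> (A *v z0) = \<mu>" unfolding \<mu>_def by (simp add: power2_norm_eq_inner)
      moreover have "z0 \<bullet> z0 = 1" using z0 by (simp add: norm_eq_1)
      ultimately have "\<mu> + 2*t*((A *v z0) \<bullet> (A *v w)) + t^2*((A *v w) \<bullet> (A *v w)) \<le> \<mu> * (1 + 2*t*(z0 \<bullet> w) + t^2*(w \<bullet> w))"
        unfolding exp2 by simp
      then show ?thesis by (simp add: algebra_simps)
    qed
    from quad_nonpos_zero[OF this] show ?thesis by simp
  qed
  have eig: "S *v z0 = \<mu> *\<^sub>R z0"
  proof -
    define w where "w = S *v z0 - \<mu> *\<^sub>R z0"
    have "w \<bullet> w = (S *v z0) \<bullet> w - \<mu> * (z0 \<bullet> w)" unfolding w_def by (simp add: inner_diff_left)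
    also have "\<dots> = 0" by (simp add: Sinner var)
    finally show ?thesis unfolding w_def by simp
  qed
  have z0ne: "z0 \<noteq> 0" using z0 by auto
  have muL: "\<mu> \<in> L" unfolding L_def using eig z0ne S_def by auto
  have finL: "finite L"
  proof -
    define ev where "ev l = (SOME z. z \<noteq> 0 \<and> S *v z = l *\<^sub>R z)" for l
    have ev: "ev l \<noteq> 0 \<and> S *v ev l = l *\<^sub>R ev l" if "l \<in> L" for l
    proof -
      from that obtain z where "z \<noteq> 0 \<and> S *v z = l *\<^sub>R z" unfolding L_def S_def by auto
      then show ?thesis unfolding ev_def by (rule someI)
    qed
    have inj: "inj_on ev L"
    proof (rule inj_onI)
      fix l l' assume l: "l \<in> L" and l': "l' \<in> L" and eq: "ev l = ev l'"
      have "l *\<^sub>R ev l = S *v ev l" using ev[OF l] by simp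
      also have "\<dots> = S *v ev l'" using eq by simp
      also have "\<dots> = l' *\<^sub>R ev l" using ev[OF l'] eq by simp
      finally have "l *\<^sub>R ev l = l' *\<^sub>R ev l" .
      moreover have "ev l \<noteq> 0" using ev[OF l] by simp
      ultimately show "l = l'" by (simp add: scaleR_cancel_right)
    qed
    have "pairwise orthogonal (ev ` L)"
    proof (clarsimp simp: pairwise_def)
      fix l l' assume l: "l \<in> L" and l': "l' \<in> L" and ne: "ev l \<noteq> ev l'"
      then have "l \<noteq> l'" by auto
      have "l * (ev l \<bullet> ev l') = (S *v ev l) \<bullet> ev l'" using ev[OF l] by simp
      also have "\<dots> = (S *v ev l') \<bullet> ev l" unfolding Sinner by (rule inner_commute)
      also have "\<dots> = l' * (ev l \<bullet> ev l')" using ev[OF l'] by (simp add: inner_commute)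
      finally show "orthogonal (ev l) (ev l')" using \<open>l \<noteq> l'\<close> by (simp add: orthogonal_def)
    qed
    moreover have "0 \<notin> ev ` L"
    proof
      assume "0 \<in> ev ` L"
      then obtain l where "l \<in> L" "0 = ev l" by (rule imageE)
      then show False using ev[of l] by simp
    qed
    ultimately have "independent (ev ` L)" by (rule pairwise_orthogonal_independent)
    then have "finite (ev ` L)" by (rule conjunct1[OF independent_bound])
    from this inj show ?thesis by (rule finite_imageD)
  qed
  have "\<mu> \<le> Max L" using finL muL by simp
  then have "sqrt \<mu> \<le> largest_singular_value A" unfolding largest_singular_value_def L_def by simp
  have "norm (A *v z) = sqrt ((norm (A *v z))^2)" by simp
  also have "\<dots> \<le> sqrt (\<mu> * (norm z)^2)" using hom[of z] by (rule real_sqrt_le_mono)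
  also have "\<dots> = sqrt \<mu> * norm z" by (simp add: real_sqrt_mult)
  also have "\<dots> \<le> largest_singular_value A * norm z"
    using \<open>sqrt \<mu> \<le> largest_singular_value A\<close> by (rule mult_right_mono) simp
  finally show ?thesis .
qed


lemma pinv_unique:
  fixes A :: "real^'m^'n"
  assumes b1: "A ** B ** A = A" and b2: "B ** A ** B = B" and b3: "transpose (A ** B) = A ** B" and b4: "transpose (B ** A) = B ** A"
    and c1: "A ** C ** A = A" and c2: "C ** A ** C = C" and c3: "transpose (A ** C) = A ** C" and c4: "transpose (C ** A) = C ** A"
  shows "C = B"
proof -
  have "B = B ** (A ** B)" using b2 by (simp add: matrix_mul_assoc)
  also have "\<dots> = B ** transpose (A ** B)" using b3 by simp
  also have "\<dots> = B ** (transpose B ** transpose A)" by (simp add: matrix_transpose_mul)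
  also have "transpose A = transpose (A ** C ** A)" using c1 by simp
  also have "\<dots> = transpose A ** transpose C ** transpose A" by (simp add: matrix_transpose_mul matrix_mul_assoc)
  also have "B ** (transpose B ** (transpose A ** transpose C ** transpose A))
      = B ** ((transpose B ** transpose A) ** (transpose C ** transpose A))" by (simp add: matrix_mul_assoc)
  also have "transpose B ** transpose A = A ** B" using b3 by (simp add: matrix_transpose_mul)
  also have "transpose C ** transpose A = A ** C" using c3 by (simp add: matrix_transpose_mul)
  also have "B ** (A ** B ** (A ** C)) = (B ** A ** B) ** A ** C" by (simp add: matrix_mul_assoc)
  also have "\<dots> = B ** A ** C" using b2 by simp
  finally have hB: "B = B ** A ** C" .
  have "C = (C ** A) ** C" using c2 by simp
  also have "\<dots> = transpose (C ** A) ** C" using c4 by simp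
  also have "\<dots> = (transpose A ** transpose C) ** C" by (simp add: matrix_transpose_mul)
  also have "transpose A = transpose (A ** B ** A)" using b1 by simp
  also have "\<dots> = transpose A ** transpose B ** transpose A" by (simp add: matrix_transpose_mul matrix_mul_assoc)
  also have "(transpose A ** transpose B ** transpose A ** transpose C) ** C
      = (transpose A ** transpose B) ** (transpose A ** transpose C) ** C" by (simp add: matrix_mul_assoc)
  also have "transpose A ** transpose B = B ** A" using b4 by (simp add: matrix_transpose_mul)
  also have "transpose A ** transpose C = C ** A" using c4 by (simp add: matrix_transpose_mul)
  also have "B ** A ** (C ** A) ** C = B ** A ** (C ** A ** C)" by (simp add: matrix_mul_assoc)
  also have "\<dots> = B ** A ** C" using c2 by simp
  finally show ?thesis using hB by simp
qed

lemma outer_sum_mv: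
  fixes u v :: "nat \<Rightarrow> real^'N"
  shows "(\<Sum>i<K. s i *\<^sub>R outer (u i) (v i)) *v z = (\<Sum>i<K. (s i * (v i \<bullet> z)) *\<^sub>R u i)"
  by (simp add: vec_eq_iff matrix_vector_mult_def outer_def inner_vec_def sum_distrib_left sum_distrib_right
      sum_component ac_simps sum.swap[of _ UNIV])

theorem theoremS59:
  fixes W :: "real^'N^'N"
    and u v :: "nat \<Rightarrow> real^'N"
    and \<sigma> :: "nat \<Rightarrow> real"
    and e :: "'n::finite \<Rightarrow> nat"
    and g :: "real^'N \<Rightarrow> real^'N \<Rightarrow> real^'N"
    and Jx Jy :: "real^'N \<Rightarrow> real^'N \<Rightarrow> real^'N^'N"
    and M :: "real^'N^'n"
    and E :: "real^'N \<Rightarrow> real"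
    and x :: "real^'N"
  assumes u_orth: "\<And>i j. i < CARD('N) \<Longrightarrow> j < CARD('N) \<Longrightarrow> u i \<bullet> u j = (if i = j then 1 else 0)"
    and v_orth: "\<And>i j. i < CARD('N) \<Longrightarrow> j < CARD('N) \<Longrightarrow> v i \<bullet> v j = (if i = j then 1 else 0)"
    and sigma_nonneg: "\<And>i. i < CARD('N) \<Longrightarrow> 0 \<le> \<sigma> i"
    and sigma_mono: "\<And>i j. i \<le> j \<Longrightarrow> j < CARD('N) \<Longrightarrow> \<sigma> j \<le> \<sigma> i"
    and svd: "W = (\<Sum>i<CARD('N). \<sigma> i *\<^sub>R outer (u i) (v i))"
    and n_lt: "CARD('n) < CARD('N)"
    and e_bij: "bij_betw e UNIV {..<CARD('n)}"
    and M_def: "M = (\<chi> k j. v (e k) $ j)"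
    and g_deriv: "\<And>x y. ((\<lambda>(a, b). g a b) has_derivative
                          (\<lambda>(h, k). Jx x y *v h + Jy x y *v k)) (at (x, y))"
    and Jx_cont: "continuous_on UNIV (\<lambda>(x, y). Jx x y)"
    and Jy_cont: "continuous_on UNIV (\<lambda>(x, y). Jy x y)"
    and E_def: "\<And>z. E z = 1 / sqrt (real CARD('n)) *
                  norm (M *v g z (W *v z) -
                        M *v g (pinv M *v (M *v z)) (W *v (pinv M *v (M *v z))))"
  shows "\<exists>x'. x' \<in> closed_segment x (transpose M *v (M *v x)) \<and>
           (let y' = W *v x' in
              E x \<le> 1 / sqrt (real CARD('n)) *
                      (norm (M *v (Jx x' y' *v (x - transpose M *v (M *v x))))
                       + \<sigma> CARD('n) * spec_norm (M ** Jy x' y') * norm x)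
            \<and> (x \<noteq> 0 \<longrightarrow>
                 E x / norm x \<le> 1 / sqrt (real CARD('n)) *
                   (largest_singular_value (Jx x' y')
                    + \<sigma> CARD('n) * largest_singular_value (Jy x' y'))))"
proof -
  let ?n = "CARD('n)" and ?N = "CARD('N)"
  have ek: "e k < ?n" for k using e_bij by (auto simp: bij_betw_def)
  have einj: "inj e" using e_bij by (auto simp: bij_betw_def)
  have erange: "i < ?n \<Longrightarrow> \<exists>k. e k = i" for i proof -
    assume "i < ?n"
    then have "i \<in> range e" using e_bij by (simp add: bij_betw_def)
    then show ?thesis by blast
  qed
  have vo: "v (e k) \<bullet> v (e k') = (if k = k' then 1 else 0)" for k k'
    using v_orth[of "e k" "e k'"] ek[of k] ek[of k'] n_lt einj by (auto simp: inj_eq)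
  have Mrow: "M $ k = v (e k)" for k unfolding M_def by (simp add: vec_eq_iff)
  have Mz: "(M *v z) $ k = v (e k) \<bullet> z" for z k by (simp add: matrix_vector_mul_component Mrow)
  have MMt: "M ** transpose M = mat 1"
    by (simp add: matrix_mult_transpose_dot_row vec_eq_iff row_def Mrow vo mat_def)
  have pinvM: "pinv M = transpose M"
    unfolding pinv_def
  proof (rule the_equality)
    show "M ** transpose M ** M = M \<and> transpose M ** M ** transpose M = transpose M \<and>
      transpose (M ** transpose M) = M ** transpose M \<and> transpose (transpose M ** M) = transpose M ** M"
      by (simp add: MMt matrix_mul_assoc[symmetric] matrix_transpose_mul)
  next
    fix C assume "M ** C ** M = M \<and> C ** M ** C = C \<and> transpose (M ** C) = M ** C \<and> transpose (C ** M) = C ** M"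
    then show "C = transpose M"
      by (intro pinv_unique[of M "transpose M" C]) (simp_all add: MMt matrix_mul_assoc[symmetric] matrix_transpose_mul)
  qed
  have Mty: "transpose M *v y = (\<Sum>k\<in>UNIV. (y $ k) *\<^sub>R v (e k))" for y
    by (simp add: vec_eq_iff matrix_vector_mult_def transpose_def M_def sum_component mult.commute)
  define P where "P = transpose M *v (M *v x)"
  define h where "h = x - P"
  have Pdef: "P = (\<Sum>k\<in>UNIV. (v (e k) \<bullet> x) *\<^sub>R v (e k))" unfolding P_def Mty by (simp add: Mz)
  have vh0: "v (e k0) \<bullet> h = 0" for k0
  proof -
    have "v (e k0) \<bullet> P = (\<Sum>k\<in>UNIV. (v (e k) \<bullet> x) * (v (e k0) \<bullet> v (e k)))"
      unfolding Pdef by (simp add: inner_sum_right)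
    also have "\<dots> = (\<Sum>k\<in>UNIV. if k = k0 then v (e k) \<bullet> x else 0)"
      by (intro sum.cong refl) (auto simp: vo)
    also have "\<dots> = v (e k0) \<bullet> x" by simp
    finally show ?thesis unfolding h_def by (simp add: inner_diff_right)
  qed
  have vih: "i < ?n \<Longrightarrow> v i \<bullet> h = 0" for i using erange vh0 by blast
  have Ph: "P \<bullet> h = 0" unfolding Pdef by (simp add: inner_sum_left vh0)
  have hx: "norm h \<le> norm x"
  proof -
    have "orthogonal h P" using Ph by (simp add: orthogonal_def inner_commute)
    then have "(norm (h + P))^2 = (norm h)^2 + (norm P)^2" by (rule norm_add_Pythagorean)
    moreover have "h + P = x" unfolding h_def by simp
    ultimately have "(norm h)^2 \<le> (norm x)^2" by simp
    then show ?thesis by (simp add: power2_le_iff_abs_le)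
  qed
  have Mbound: "norm (M *v z) \<le> norm z" for z
  proof -
    have "(norm (M *v z))^2 = (\<Sum>k\<in>UNIV. (M *v z)$k * (M *v z)$k)"
      by (simp only: power2_norm_eq_inner inner_vec_def inner_real_def)
    also have "\<dots> = (\<Sum>k\<in>UNIV. (v (e k) \<bullet> z)^2)"
      by (simp only: Mz power2_eq_square)
    also have "\<dots> \<le> (norm z)^2"
      using bessel[of UNIV "\<lambda>k. v (e k)" z] vo by simp
    finally show ?thesis by (simp add: power2_le_iff_abs_le)
  qed
  have sn_nonneg: "0 \<le> \<sigma> ?n" using sigma_nonneg n_lt by simp
  have Wh: "norm (W *v h) \<le> \<sigma> ?n * norm x"
  proof -
    have "W *v h = (\<Sum>i<?N. (\<sigma> i * (v i \<bullet> h)) *\<^sub>R u i)" unfolding svd by (rule outer_sum_mv)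
    then have "(norm (W *v h))^2 = (\<Sum>i<?N. (\<sigma> i * (v i \<bullet> h)) * (\<sigma> i * (v i \<bullet> h)))"
      unfolding power2_norm_eq_inner by (simp only:) (rule orth_inner_sum, auto simp: u_orth)
    also have "\<dots> \<le> (\<Sum>i<?N. (\<sigma> ?n)^2 * (v i \<bullet> h)^2)"
    proof (rule sum_mono)
      fix i assume i: "i \<in> {..<?N}"
      show "(\<sigma> i * (v i \<bullet> h)) * (\<sigma> i * (v i \<bullet> h)) \<le> (\<sigma> ?n)^2 * (v i \<bullet> h)^2"
      proof (cases "i < ?n")
        case True then show ?thesis using vih by simp
      next
        case False
        then have "\<sigma> i \<le> \<sigma> ?n" "0 \<le> \<sigma> i" using sigma_mono sigma_nonneg i by auto
        then have "(\<sigma> i)^2 \<le> (\<sigma> ?n)^2" by (simp add: power_mono)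
        then show ?thesis by (simp add: power2_eq_square[symmetric] power_mult_distrib mult_right_mono)
      qed
    qed
    also have "\<dots> = (\<sigma> ?n)^2 * (\<Sum>i<?N. (v i \<bullet> h)^2)" by (simp add: sum_distrib_left)
    also have "\<dots> \<le> (\<sigma> ?n)^2 * (norm h)^2"
      using bessel[of "{..<?N}" v h] v_orth by (intro mult_left_mono) auto
    also have "\<dots> \<le> (\<sigma> ?n * norm x)^2"
      using hx by (simp add: power_mult_distrib mult_left_mono power_mono)
    finally show ?thesis using sn_nonneg by (simp add: power2_le_iff_abs_le)
  qed
  define \<gamma> where "\<gamma> s = P + s *\<^sub>R h" for s :: real
  define F where "F s = M *v g (\<gamma> s) (W *v \<gamma> s)" for s
  define F' where "F' s = (\<lambda>ds::real. M *v (Jx (\<gamma> s) (W *v \<gamma> s) *v (ds *\<^sub>R h) + Jy (\<gamma> s) (W *v \<gamma> s) *v (W *v (ds *\<^sub>R h))))" for s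
  have dF: "(F has_derivative F' s) (at s)" for s
  proof -
    have dg: "(\<gamma> has_derivative (\<lambda>ds. ds *\<^sub>R h)) (at s)"
      unfolding \<gamma>_def
      by (rule has_derivative_eq_rhs[OF has_derivative_add[OF has_derivative_const has_derivative_scaleR_left[OF has_derivative_ident]]]) simp
    have dW: "((\<lambda>s. W *v \<gamma> s) has_derivative (\<lambda>ds. W *v (ds *\<^sub>R h))) (at s)"
      by (rule bounded_linear.has_derivative[OF matrix_vector_mul_bounded_linear dg])
    have d1: "((\<lambda>s. (\<gamma> s, W *v \<gamma> s)) has_derivative (\<lambda>ds. (ds *\<^sub>R h, W *v (ds *\<^sub>R h)))) (at s)"
      by (rule has_derivative_Pair[OF dg dW])
    have d2: "((\<lambda>(a, b). g a b) has_derivative (\<lambda>(k1, k2). Jx (\<gamma> s) (W *v \<gamma> s) *v k1 + Jy (\<gamma> s) (W *v \<gamma> s) *v k2)) (at (\<gamma> s, W *v \<gamma> s))"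
      by (rule g_deriv)
    from diff_chain_at[OF d1 d2]
    have "(((\<lambda>(a, b). g a b) \<circ> (\<lambda>s. (\<gamma> s, W *v \<gamma> s))) has_derivative
      ((\<lambda>(k1, k2). Jx (\<gamma> s) (W *v \<gamma> s) *v k1 + Jy (\<gamma> s) (W *v \<gamma> s) *v k2) \<circ> (\<lambda>ds. (ds *\<^sub>R h, W *v (ds *\<^sub>R h))))) (at s)" .
    from bounded_linear.has_derivative[OF matrix_vector_mul_bounded_linear[of M] this]
    show ?thesis unfolding F_def F'_def by (simp add: o_def)
  qed
  have contF: "continuous_on {0..1} F"
    using dF by (meson continuous_at_imp_continuous_on has_derivative_continuous)
  obtain s where s: "s \<in> {0<..<1}" and mvt: "norm (F 1 - F 0) \<le> norm (F' s (1 - 0))"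
    using mvt_general[of 0 1 F F', OF _ contF dF] by auto
  define x' where "x' = \<gamma> s"
  define y' where "y' = W *v x'"
  have F1: "F 1 = M *v g x (W *v x)" unfolding F_def \<gamma>_def h_def by simp
  have F0: "F 0 = M *v g P (W *v P)" unfolding F_def \<gamma>_def by simp
  have Ex: "E x = 1 / sqrt (real ?n) * norm (F 1 - F 0)"
    unfolding E_def F1 F0 pinvM P_def by simp
  have seg: "x' \<in> closed_segment x (transpose M *v (M *v x))"
  proof -
    have "x' = (1 - s) *\<^sub>R P + s *\<^sub>R x" unfolding x'_def \<gamma>_def h_def by (simp add: algebra_simps)
    then have "x' \<in> closed_segment P x" using s unfolding in_segment by (intro exI[of _ s]) auto
    then show ?thesis unfolding P_def by (simp add: closed_segment_commute)
  qed
  have Fs: "F' s (1 - 0) = M *v (Jx x' y' *v h) + (M ** Jy x' y') *v (W *v h)"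
    unfolding F'_def x'_def y'_def by (simp add: matrix_vector_right_distrib matrix_vector_mul_assoc matrix_mul_assoc)
  have sp: "norm ((M ** Jy x' y') *v (W *v h)) \<le> spec_norm (M ** Jy x' y') * (\<sigma> ?n * norm x)"
  proof -
    have "norm ((M ** Jy x' y') *v (W *v h)) \<le> spec_norm (M ** Jy x' y') * norm (W *v h)"
      unfolding spec_norm_def by (rule onorm[OF matrix_vector_mul_bounded_linear])
    also have "\<dots> \<le> spec_norm (M ** Jy x' y') * (\<sigma> ?n * norm x)"
      using Wh by (intro mult_left_mono) (auto simp: spec_norm_def intro: onorm_pos_le[OF matrix_vector_mul_bounded_linear])
    finally show ?thesis .
  qed
  have b1: "norm (F 1 - F 0) \<le> norm (M *v (Jx x' y' *v h)) + \<sigma> ?n * spec_norm (M ** Jy x' y') * norm x"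
  proof -
    have "norm (F 1 - F 0) \<le> norm (M *v (Jx x' y' *v h)) + norm ((M ** Jy x' y') *v (W *v h))"
      using mvt unfolding Fs by (meson norm_triangle_ineq order_trans)
    then show ?thesis using sp by (simp add: ac_simps)
  qed
  have c: "0 \<le> 1 / sqrt (real ?n)" by simp
  have part1: "E x \<le> 1 / sqrt (real ?n) * (norm (M *v (Jx x' y' *v h)) + \<sigma> ?n * spec_norm (M ** Jy x' y') * norm x)"
    unfolding Ex using b1 c by (rule mult_left_mono)
  have lsv_nonneg: "0 \<le> largest_singular_value A" for A :: "real^'N^'N"
  proof -
    obtain z :: "real^'N" where "norm z = 1" using vector_choose_size[of 1] by auto
    with lsv_bound[of A z] show ?thesis by (metis norm_ge_zero order_trans mult.right_neutral)
  qed
  have part2: "E x / norm x \<le> 1 / sqrt (real ?n) * (largest_singular_value (Jx x' y') + \<sigma> ?n * largest_singular_value (Jy x' y'))"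
    if "x \<noteq> 0"
  proof -
    have nx: "norm x > 0" using that by simp
    have t1: "norm (M *v (Jx x' y' *v h)) \<le> largest_singular_value (Jx x' y') * norm x"
    proof -
      have "norm (M *v (Jx x' y' *v h)) \<le> norm (Jx x' y' *v h)" by (rule Mbound)
      also have "\<dots> \<le> largest_singular_value (Jx x' y') * norm h" by (rule lsv_bound)
      also have "\<dots> \<le> largest_singular_value (Jx x' y') * norm x" using hx lsv_nonneg by (rule mult_left_mono)
      finally show ?thesis .
    qed
    have "spec_norm (M ** Jy x' y') \<le> largest_singular_value (Jy x' y')"
      unfolding spec_norm_def
    proof (rule onorm_le)
      fix z
      have "norm ((M ** Jy x' y') *v z) = norm (M *v (Jy x' y' *v z))" by (simp add: matrix_vector_mul_assoc)
      also have "\<dots> \<le> norm (Jy x' y' *v z)" by (rule Mbound)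
      also have "\<dots> \<le> largest_singular_value (Jy x' y') * norm z" by (rule lsv_bound)
      finally show "norm ((M ** Jy x' y') *v z) \<le> largest_singular_value (Jy x' y') * norm z" .
    qed
    then have t2: "\<sigma> ?n * spec_norm (M ** Jy x' y') * norm x \<le> \<sigma> ?n * largest_singular_value (Jy x' y') * norm x"
      using sn_nonneg by (intro mult_right_mono mult_left_mono) auto
    have "E x \<le> 1 / sqrt (real ?n) * ((largest_singular_value (Jx x' y') + \<sigma> ?n * largest_singular_value (Jy x' y')) * norm x)"
    proof -
      have "norm (M *v (Jx x' y' *v h)) + \<sigma> ?n * spec_norm (M ** Jy x' y') * norm x
          \<le> (largest_singular_value (Jx x' y') + \<sigma> ?n * largest_singular_value (Jy x' y')) * norm x"
        using t1 t2 by (simp add: distrib_right)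
      from mult_left_mono[OF this c] part1 show ?thesis by linarith
    qed
    then show ?thesis using nx by (simp add: divide_le_eq ac_simps)
  qed
  show ?thesis
    unfolding Let_def
    using seg part1 part2 unfolding y'_def h_def P_def by blast
qed

end
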